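(* Let $\mathcal B\subseteq P(D)$ be a Boolean algebra with $|\mathcal B|<\mathfrak b$ and let $\mathcal S=\{S_n:n\in\omega\}$ be an $s$-family with each $S_n(k)\in\mathcal B$. For $g\in\omega^\omega$ let $X_g=\bigcup_{n\in\omega}S_n(g(n))$. Then there exists $g_0\in\omega^\omega$ such that for every $g\in\omega^\omega$ with $g\ge g_0$ (pointwise) and every $A\in\mathcal B$ with $A\subseteq X_g$, there is $N\in\omega$ with $A\subseteq\bigcup_{j\le N}S_j(g(j))$.
   Context: $\mathfrak b$ is the bounding number. $\lambda$ is the product measure on $2^\omega$, $D\subseteq 2^\omega$ a fixed countable dense set, $\mathcal A_0$ the subalgebra of $P(D)$ generated by $\{C\cap D: C \text{ clopen}\}$ and the finite subsets of $D$, $\mu_0((C\cap D)\triangle F)=\lambda(C)$ for $C$ clopen and $F$ finite. An $s$-family is a countable family $\mathcal S$ of sequences $(S(k))_{k\in\omega}$ of elements of $\mathcal A_0$ with $S(0)\supseteq S(1)\supseteq\cdots$, $\bigcap_kS(k)=\emptyset$ and $\lim_k\mu_0(S(k))=0$. *)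

theory Defs
  imports "HOL-Analysis.Analysis" "HOL-Probability.Probability"
begin

text \<open>The Cantor space 2^omega is the type nat => bool, with the product topology
(bool discrete). lambda is the product (fair coin) measure.\<close>

definition clopen :: "(nat \<Rightarrow> bool) set \<Rightarrow> bool" where
  "clopen C \<longleftrightarrow> open C \<and> closed C"

definition cantor_measure :: "(nat \<Rightarrow> bool) measure" where
  "cantor_measure = PiM UNIV (\<lambda>_. measure_pmf (bernoulli_pmf (1/2)))"

definition A0 :: "(nat \<Rightarrow> bool) set \<Rightarrow> (nat \<Rightarrow> bool) set set" where
  "A0 D = \<Inter>{M. algebra D M \<and> {C \<inter> D | C. clopen C} \<subseteq> M \<and> {F. finite F \<and> F \<subseteq> D} \<subseteq> M}"

definition mu0 :: "(nat \<Rightarrow> bool) set \<Rightarrow> (nat \<Rightarrow> bool) set \<Rightarrow> real" where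
  "mu0 D X = measure cantor_measure
      (SOME C. clopen C \<and> (\<exists>F. finite F \<and> X = (C \<inter> D) \<union> F - ((C \<inter> D) \<inter> F)))"

definition s_sequence :: "(nat \<Rightarrow> bool) set \<Rightarrow> (nat \<Rightarrow> (nat \<Rightarrow> bool) set) \<Rightarrow> bool" where
  "s_sequence D S \<longleftrightarrow> (\<forall>k. S k \<in> A0 D) \<and> (\<forall>k. S (Suc k) \<subseteq> S k) \<and>
     (\<Inter>k. S k) = {} \<and> (\<lambda>k. mu0 D (S k)) \<longlonglongrightarrow> 0"

definition s_family :: "(nat \<Rightarrow> bool) set \<Rightarrow> (nat \<Rightarrow> nat \<Rightarrow> (nat \<Rightarrow> bool) set) \<Rightarrow> bool" where
  "s_family D S \<longleftrightarrow> (\<forall>n. s_sequence D (S n))"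

text \<open>Bounding number: a family F of functions is bounded if some h eventually
dominates every member. |B| < b means every family of size at most |B| is bounded.\<close>

definition bounded_family :: "(nat \<Rightarrow> nat) set \<Rightarrow> bool" where
  "bounded_family F \<longleftrightarrow> (\<exists>h. \<forall>f\<in>F. \<forall>\<^sub>F n in sequentially. f n \<le> h n)"

definition card_less_bounding :: "'a set \<Rightarrow> bool" where
  "card_less_bounding X \<longleftrightarrow>
     (\<forall>F::(nat \<Rightarrow> nat) set. (card_of F, card_of X) \<in> ordLeq \<longrightarrow> bounded_family F)"

end

theory Submission
  imports Defs
begin

lemma dickson_aux:
  fixes W :: "('a \<Rightarrow> nat) set"
  shows "finite I \<Longrightarrow> \<exists>F. finite F \<and> F \<subseteq> W \<and> (\<forall>t\<in>W. \<exists>p\<in>F. \<forall>i\<in>I. p i \<le> t i)"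
proof (induction "card I" arbitrary: I W rule: less_induct)
  case less
  show ?case
  proof (cases "W = {}")
    case True
    then show ?thesis by auto
  next
    case False
    then obtain w0 where w0: "w0 \<in> W" by auto
    have ex: "\<exists>F. finite F \<and> F \<subseteq> {t\<in>W. t i = v} \<and>
        (\<forall>t\<in>{t\<in>W. t i = v}. \<exists>p\<in>F. \<forall>j\<in>I-{i}. p j \<le> t j)" if "i \<in> I" for i v
    proof -
      have "card (I - {i}) < card I"
        by (rule card_Diff1_less[OF less.prems that])
      then show ?thesis using less.hyps[of "I - {i}" "{t\<in>W. t i = v}"] less.prems by auto
    qed
    define Fs where "Fs i v = (SOME F. finite F \<and> F \<subseteq> {t\<in>W. t i = v} \<and>
        (\<forall>t\<in>{t\<in>W. t i = v}. \<exists>p\<in>F. \<forall>j\<in>I-{i}. p j \<le> t j))" for i v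
    have Fs: "finite (Fs i v) \<and> Fs i v \<subseteq> {t\<in>W. t i = v} \<and>
        (\<forall>t\<in>{t\<in>W. t i = v}. \<exists>p\<in>Fs i v. \<forall>j\<in>I-{i}. p j \<le> t j)" if "i \<in> I" for i v
      unfolding Fs_def using someI_ex[OF ex[OF that, of v]] .
    define F where "F = insert w0 (\<Union>i\<in>I. \<Union>v\<in>{..<w0 i}. Fs i v)"
    have "finite F" unfolding F_def using Fs less.prems by auto
    moreover have "F \<subseteq> W" unfolding F_def using Fs w0 by blast
    moreover have "\<exists>p\<in>F. \<forall>i\<in>I. p i \<le> t i" if t: "t \<in> W" for t
    proof (cases "\<forall>i\<in>I. w0 i \<le> t i")
      case True
      then show ?thesis unfolding F_def by auto
    next
      case False
      then obtain i where i: "i \<in> I" "t i < w0 i" by (auto simp: not_le)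
      from Fs[OF i(1), of "t i"] t obtain p where p: "p \<in> Fs i (t i)" "\<forall>j\<in>I-{i}. p j \<le> t j"
        by blast
      have "p i = t i" using Fs[OF i(1), of "t i"] p(1) by blast
      then have "\<forall>j\<in>I. p j \<le> t j" using p(2) by (metis Diff_iff le_refl singletonD)
      moreover have "p \<in> F" unfolding F_def using i p(1) by blast
      ultimately show ?thesis by blast
    qed
    ultimately show ?thesis by blast
  qed
qed

theorem lemma4p2:
  fixes D :: "(nat \<Rightarrow> bool) set"
    and B :: "(nat \<Rightarrow> bool) set set"
    and S :: "nat \<Rightarrow> nat \<Rightarrow> (nat \<Rightarrow> bool) set"
  assumes "countable D" and "closure D = UNIV"
    and "algebra D B"
    and "card_less_bounding B"
    and "s_family D S"
    and "\<forall>n k. S n k \<in> B"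
  shows "\<exists>g0 :: nat \<Rightarrow> nat. \<forall>g. (\<forall>n. g0 n \<le> g n) \<longrightarrow>
           (\<forall>A\<in>B. A \<subseteq> (\<Union>n. S n (g n)) \<longrightarrow> (\<exists>N. A \<subseteq> (\<Union>j\<le>N. S j (g j))))"
proof -
  have dec: "\<And>n k. S n (Suc k) \<subseteq> S n k" and empt: "\<And>n. (\<Inter>k. S n k) = {}"
    using assms(5) unfolding s_family_def s_sequence_def by auto
  have mono: "S n k' \<subseteq> S n k" if "k \<le> k'" for n k k'
    using lift_Suc_antimono_le[of "S n", OF dec that] .
  define kk where "kk j x = (LEAST k. x \<notin> S j k)" for j x
  have kk: "x \<notin> S j k" if "kk j x \<le> k" for j x k
  proof -
    have "\<exists>k. x \<notin> S j k" using empt[of j] by blast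
    then have "x \<notin> S j (kk j x)" unfolding kk_def by (rule LeastI_ex)
    then show ?thesis using mono[OF that] by blast
  qed
  define C where "C A M t = A - (\<Union>j<M. S j (t j))" for A M and t :: "nat \<Rightarrow> nat"
  define FF where "FF A M = (SOME F. finite F \<and> F \<subseteq> {t. C A M t \<noteq> {}} \<and>
      (\<forall>t\<in>{t. C A M t \<noteq> {}}. \<exists>p\<in>F. \<forall>i\<in>{..<M}. p i \<le> t i))" for A M
  have FF: "finite (FF A M) \<and> FF A M \<subseteq> {t. C A M t \<noteq> {}} \<and>
      (\<forall>t\<in>{t. C A M t \<noteq> {}}. \<exists>p\<in>FF A M. \<forall>i\<in>{..<M}. p i \<le> t i)" for A M
    unfolding FF_def
    by (rule someI_ex) (rule dickson_aux, simp)
  define xp where "xp A M p = (SOME x. x \<in> C A M p)" for A M p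
  have xp: "xp A M p \<in> C A M p" if "p \<in> FF A M" for A M p
    using FF[of A M] that unfolding xp_def by (metis (mono_tags, lifting) all_not_in_conv mem_Collect_eq someI_ex subsetD)
  define fA where "fA A j = (\<Sum>M\<le>j. \<Sum>p\<in>FF A M. kk j (xp A M p))" for A j
  have fA: "kk j (xp A M p) \<le> fA A j" if "M \<le> j" "p \<in> FF A M" for A j M p
  proof -
    have "kk j (xp A M p) \<le> (\<Sum>p\<in>FF A M. kk j (xp A M p))"
      using FF[of A M] that(2) by (intro member_le_sum) auto
    also have "\<dots> \<le> fA A j" unfolding fA_def
      using that(1) by (intro member_le_sum[where f = "\<lambda>M. \<Sum>p\<in>FF A M. kk j (xp A M p)"]) auto
    finally show ?thesis .
  qed
  have "bounded_family (fA ` B)"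
    using assms(4) card_of_image[of fA B] unfolding card_less_bounding_def by blast
  then obtain h where h: "\<forall>f\<in>fA ` B. \<forall>\<^sub>F n in sequentially. f n \<le> h n"
    unfolding bounded_family_def by blast
  show ?thesis
  proof (intro exI[of _ h] allI impI ballI)
    fix g A
    assume g: "\<forall>n. h n \<le> g n" and A: "A \<in> B" and cov: "A \<subseteq> (\<Union>n. S n (g n))"
    from h A obtain M where M: "\<And>n. n \<ge> M \<Longrightarrow> fA A n \<le> h n"
      by (auto simp: eventually_sequentially)
    have "A \<subseteq> (\<Union>j<M. S j (g j))"
    proof (rule ccontr)
      assume "\<not> ?thesis"
      then have "C A M g \<noteq> {}" unfolding C_def by blast
      then obtain p where p: "p \<in> FF A M" "\<forall>i\<in>{..<M}. p i \<le> g i"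
        using FF[of A M] by blast
      define x where "x = xp A M p"
      have x: "x \<in> C A M p" unfolding x_def using xp[OF p(1)] .
      have "x \<in> A" using x unfolding C_def by blast
      have "x \<notin> S j (g j)" for j
      proof (cases "j < M")
        case True
        then have "x \<notin> S j (p j)" using x unfolding C_def by blast
        moreover have "S j (g j) \<subseteq> S j (p j)" using mono p(2) True by auto
        ultimately show ?thesis by blast
      next
        case False
        then have "kk j x \<le> g j" using fA[of M j p A] p(1) M[of j] g
          unfolding x_def by (metis le_trans not_less)
        then show ?thesis by (rule kk)
      qed
      then show False using cov \<open>x \<in> A\<close> by blast
    qed
    moreover have "(\<Union>j<M. S j (g j)) \<subseteq> (\<Union>j\<le>M. S j (g j))" by (rule UN_mono) auto
    ultimately have "A \<subseteq> (\<Union>j\<le>M. S j (g j))" by (rule subset_trans)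
    then show "\<exists>N. A \<subseteq> (\<Union>j\<le>N. S j (g j))" by blast
  qed
qed

end
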